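(* Consider the DRV process with choice function $k(n)\to\infty$. Then $\mathbb{E}[D_0(\lfloor n/2\rfloor)] = O\!\left(\frac{n}{k(n)}\right)$, where $D_0(t)$ denotes the number of vertices of degree $0$ after $t$ edges have been added.
   Context: The DRV process (Degree Rule with Varying Choice): fix a function $k=k(n)$ with $2\le k(n)\le n$. Start at time $t=0$ with $n$ isolated vertices and no edges. At each time step $t=0,1,2,\dots$ (one edge is added per step, so after $t$ steps the graph has $t$ edges; multiple edges are allowed), independently of the past choose a set $V_t$ of $k(n)$ distinct vertices uniformly at random, and let $V_{t,d}$ be the set of vertices in $V_t$ whose current degree is $d$. If $|V_{t,0}|\ge 2$, add an edge between two vertices of $V_{t,0}$ sampled uniformly at random without replacement; otherwise, if $|V_{t,1}|\ge 2$, add an edge between two vertices of $V_{t,1}$ sampled uniformly at random without replacement; otherwise add an edge between two vertices of $V_t$ sampled uniformly at random without replacement. $D_i(t)$ is the number of vertices of degree $i$ after $t$ steps. *)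

theory Defs
  imports "HOL-Probability.Probability" "HOL-Library.Landau_Symbols"
begin

text \<open>A multigraph on the vertex set {0..<n} is represented by the list of its edges
  (most recent edge first); multiple edges are allowed.\<close>
type_synonym mgraph = "(nat \<times> nat) list"

definition degree :: "mgraph \<Rightarrow> nat \<Rightarrow> nat" where
  "degree G v = length (filter (\<lambda>e. fst e = v) G) + length (filter (\<lambda>e. snd e = v) G)"

definition Dcount :: "nat \<Rightarrow> nat \<Rightarrow> mgraph \<Rightarrow> nat" where
  "Dcount n i G = card {v \<in> {..<n}. degree G v = i}"

text \<open>Uniform pair of distinct vertices from W (ordered pairs uniform = unordered pair
  sampled uniformly without replacement).\<close>
definition distinct_pairs :: "nat set \<Rightarrow> (nat \<times> nat) set" where
  "distinct_pairs W = {(a, b). a \<in> W \<and> b \<in> W \<and> a \<noteq> b}"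

definition drv_step :: "nat \<Rightarrow> nat \<Rightarrow> mgraph \<Rightarrow> mgraph pmf" where
  "drv_step n k G =
     pmf_of_set {S. S \<subseteq> {..<n} \<and> card S = k} \<bind> (\<lambda>V.
       let V0 = {v \<in> V. degree G v = 0};
           V1 = {v \<in> V. degree G v = 1};
           W = (if card V0 \<ge> 2 then V0 else if card V1 \<ge> 2 then V1 else V)
       in pmf_of_set (distinct_pairs W) \<bind> (\<lambda>e. return_pmf (e # G)))"

fun drv :: "nat \<Rightarrow> nat \<Rightarrow> nat \<Rightarrow> mgraph pmf" where
  "drv n k 0 = return_pmf []"
| "drv n k (Suc t) = drv n k t \<bind> drv_step n k"

end

theory Submission
  imports Defs
begin


lemma exp_bind_pmf:
  fixes f :: "'b \<Rightarrow> real"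
  assumes "\<And>x. \<bar>f x\<bar> \<le> B"
  shows "measure_pmf.expectation (bind_pmf p q) f = measure_pmf.expectation p (\<lambda>x. measure_pmf.expectation (q x) f)"
  unfolding measure_pmf_bind
  by (rule integral_bind[where K="count_space UNIV" and B=B and B'=1])
     (auto simp: assms measure_pmf_in_subprob_algebra prob_space_imp_subprob_space measure_pmf.prob_space_axioms measure_pmf.emeasure_space_1)

lemma exp_le_supp:
  fixes f g :: "'b \<Rightarrow> real"
  assumes "\<And>x. \<bar>f x\<bar> \<le> B" "\<And>x. \<bar>g x\<bar> \<le> B'" "\<And>x. x \<in> set_pmf p \<Longrightarrow> f x \<le> g x"
  shows "measure_pmf.expectation p f \<le> measure_pmf.expectation p g"
proof (rule integral_mono_AE)
  show "integrable (measure_pmf p) f"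
    by (rule measure_pmf.integrable_const_bound[where B=B]) (auto simp: assms)
  show "integrable (measure_pmf p) g"
    by (rule measure_pmf.integrable_const_bound[where B=B']) (auto simp: assms)
  show "AE x in measure_pmf p. f x \<le> g x" using assms(3) by (simp add: AE_measure_pmf_iff)
qed

lemma exp_le_const:
  fixes f :: "'b \<Rightarrow> real"
  assumes "\<And>x. \<bar>f x\<bar> \<le> B" "\<And>x. x \<in> set_pmf p \<Longrightarrow> f x \<le> c"
  shows "measure_pmf.expectation p f \<le> c"
  using exp_le_supp[of f B "\<lambda>_. c" "\<bar>c\<bar>" p] assms by simp



lemma choose_step: "(a choose Suc k) * Suc k = (a choose k) * (a - k)"
proof (cases a)
  case 0 then show ?thesis by simp
next
  case (Suc b)
  have "Suc b * (b choose k) = (Suc b choose Suc k) * Suc k" by (rule Suc_times_binomial_eq)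
  moreover have "(Suc b - k) * (Suc b choose k) = Suc b * ((Suc b - 1) choose k)" by (rule binomial_absorb_comp)
  ultimately show ?thesis using Suc by (simp add: mult.commute)
qed

lemma binom_ratio:
  assumes "a \<le> n"
  shows "real (a choose k) * real n ^ k \<le> real (n choose k) * real a ^ k"
proof (induction k)
  case 0 then show ?case by simp
next
  case (Suc k)
  have e1: "real (a choose Suc k) * real (Suc k) = real (a choose k) * real (a - k)"
    using choose_step[of a k] by (metis of_nat_mult)
  have e2: "real (n choose Suc k) * real (Suc k) = real (n choose k) * real (n - k)"
    using choose_step[of n k] by (metis of_nat_mult)
  have key: "real (a - k) * real n \<le> real (n - k) * real a"
  proof (cases "k \<le> a")
    case True
    then have "k \<le> n" using assms by simp
    have "real a * real k \<le> real k * real n" using assms by (metis mult.commute mult_left_mono of_nat_0_le_iff of_nat_mono)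
    then show ?thesis using True \<open>k \<le> n\<close> by (simp add: of_nat_diff algebra_simps)
  next
    case False then show ?thesis by simp
  qed
  have "real (a choose Suc k) * real n ^ Suc k * real (Suc k)
        = (real (a choose Suc k) * real (Suc k)) * (real n ^ k * real n)"
    by (simp only: power_Suc mult_ac)
  also have "\<dots> = (real (a choose k) * real (a - k)) * (real n ^ k * real n)"
    by (simp only: e1)
  also have "\<dots> = (real (a choose k) * real n ^ k) * (real (a - k) * real n)"
    by (simp only: mult_ac)
  also have "\<dots> \<le> (real (n choose k) * real a ^ k) * (real (a - k) * real n)"
    using Suc.IH by (intro mult_right_mono) auto
  also have "\<dots> \<le> (real (n choose k) * real a ^ k) * (real (n - k) * real a)"
    using key by (intro mult_left_mono) auto
  also have "\<dots> = (real (n choose k) * real (n - k)) * (real a ^ k * real a)"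
    by (simp only: mult_ac)
  also have "\<dots> = (real (n choose Suc k) * real (Suc k)) * (real a ^ k * real a)"
    by (simp only: e2)
  also have "\<dots> = real (n choose Suc k) * real a ^ Suc k * real (Suc k)"
    by (simp only: power_Suc mult_ac)
  finally have "real (a choose Suc k) * real n ^ Suc k * real (Suc k)
     \<le> real (n choose Suc k) * real a ^ Suc k * real (Suc k)" .
  then show ?case by (simp del: of_nat_Suc)
qed



lemma miss_count:
  assumes "Z1 \<subseteq> {..<n}" "card Z1 = y" "k \<le> n" "n > 0"
  shows "real (card {V. V \<subseteq> {..<n} - Z1 \<and> card V = k}) \<le> real (n choose k) * exp (- real k / real n) ^ y"
proof -
  have fin: "finite Z1" using assms(1) finite_subset by blast
  have c: "card ({..<n} - Z1) = n - y" using assms fin by (simp add: card_Diff_subset)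
  have cA: "card {V. V \<subseteq> {..<n} - Z1 \<and> card V = k} = (n - y) choose k"
    using n_subsets[of "{..<n} - Z1" k] c by simp
  moreover have yn: "y \<le> n" using assms card_mono[of "{..<n}" Z1] by simp
  have "real ((n - y) choose k) * real n ^ k \<le> real (n choose k) * real (n - y) ^ k"
    by (rule binom_ratio) simp
  hence "real ((n - y) choose k) \<le> real (n choose k) * (real (n - y) / real n) ^ k"
    using assms(4) by (simp add: power_divide field_simps)
  also have "\<dots> \<le> real (n choose k) * exp (- real y / real n) ^ k"
  proof (intro mult_left_mono power_mono)
    have "real (n - y) / real n = 1 + (- real y / real n)" using yn assms(4) by (simp add: of_nat_diff field_simps)
    also have "\<dots> \<le> exp (- real y / real n)" by (rule exp_ge_add_one_self)
    finally show "real (n - y) / real n \<le> exp (- real y / real n)" .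
  qed auto
  also have "exp (- real y / real n) ^ k = exp (- real k / real n) ^ y"
    by (simp add: exp_of_nat_mult[symmetric] algebra_simps)
  finally show ?thesis using cA by simp
qed

lemma bad_count:
  assumes Z: "Z \<subseteq> {..<n}" "card Z = x" and kn: "k \<le> n" "n > 0"
  shows "real (card {V. V \<subseteq> {..<n} \<and> card V = k \<and> card (V \<inter> Z) < 2})
          \<le> 2 * real (n choose k) * exp (- real k / real n) ^ (x div 2)"
proof -
  define y where "y = x div 2"
  have finZ: "finite Z" using Z finite_subset by blast
  obtain Z1 where Z1: "Z1 \<subseteq> Z" "card Z1 = y" using obtain_subset_with_card_n[of y Z] Z y_def by (metis div_le_dividend)
  have "card (Z - Z1) = x - y" using Z1 Z finZ by (simp add: card_Diff_subset finite_subset)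
  moreover have yle: "y \<le> x - y" unfolding y_def by linarith
  ultimately obtain Z2 where Z2: "Z2 \<subseteq> Z - Z1" "card Z2 = y" using obtain_subset_with_card_n[of y "Z - Z1"] \<open>card (Z - Z1) = x - y\<close> yle
    by (metis)
  let ?A = "\<lambda>Zi. {V. V \<subseteq> {..<n} - Zi \<and> card V = k}"
  have sub: "{V. V \<subseteq> {..<n} \<and> card V = k \<and> card (V \<inter> Z) < 2} \<subseteq> ?A Z1 \<union> ?A Z2"
  proof
    fix V assume V: "V \<in> {V. V \<subseteq> {..<n} \<and> card V = k \<and> card (V \<inter> Z) < 2}"
    show "V \<in> ?A Z1 \<union> ?A Z2"
    proof (rule ccontr)
      assume "V \<notin> ?A Z1 \<union> ?A Z2"
      then obtain a b where ab: "a \<in> V" "a \<in> Z1" "b \<in> V" "b \<in> Z2" using V by blast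
      have "a \<noteq> b" using ab Z2 by blast
      have "{a, b} \<subseteq> V \<inter> Z" using ab Z1 Z2 by blast
      moreover have "finite (V \<inter> Z)" using finZ by simp
      ultimately have "card {a, b} \<le> card (V \<inter> Z)" by (rule card_mono[rotated])
      then show False using V \<open>a \<noteq> b\<close> by simp
    qed
  qed
  have finA: "finite (?A Zi)" for Zi by (rule finite_subset[of _ "Pow {..<n}"]) auto
  have "card {V. V \<subseteq> {..<n} \<and> card V = k \<and> card (V \<inter> Z) < 2} \<le> card (?A Z1 \<union> ?A Z2)"
    using sub finA by (intro card_mono) auto
  also have "\<dots> \<le> card (?A Z1) + card (?A Z2)" by (rule card_Un_le)
  finally have "real (card {V. V \<subseteq> {..<n} \<and> card V = k \<and> card (V \<inter> Z) < 2}) \<le> real (card (?A Z1)) + real (card (?A Z2))"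
    by linarith
  also have "\<dots> \<le> real (n choose k) * exp (- real k / real n) ^ y + real (n choose k) * exp (- real k / real n) ^ y"
    using miss_count[of Z1 n y k] miss_count[of Z2 n y k] Z1 Z2 Z kn by (intro add_mono) auto
  finally show ?thesis unfolding y_def by simp
qed



definition Zset :: "nat \<Rightarrow> mgraph \<Rightarrow> nat set" where
  "Zset n G = {v \<in> {..<n}. degree G v = 0}"

lemma Dcount0: "Dcount n 0 G = card (Zset n G)"
  by (simp add: Dcount_def Zset_def)

lemma Zset_sub: "Zset n G \<subseteq> {..<n}" by (auto simp: Zset_def)

lemma degree_cons: "degree ((a,b)#G) v = degree G v + (if a = v then 1 else 0) + (if b = v then 1 else 0)"
  by (simp add: degree_def)

lemma Zset_cons: "Zset n ((a,b)#G) = Zset n G - {a,b}"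
  by (auto simp: Zset_def degree_cons)

lemma Dcount_cons_le: "Dcount n 0 ((a,b)#G) \<le> Dcount n 0 G"
  unfolding Dcount0 Zset_cons by (rule card_mono) (auto intro: finite_subset[OF Zset_sub])

lemma Dcount_cons_ge: "Dcount n 0 G - 2 \<le> Dcount n 0 ((a,b)#G)"
proof -
  have "card (Zset n G) - card {a,b} \<le> card (Zset n G - {a,b})"
    by (rule diff_card_le_card_Diff) simp
  moreover have "card {a,b} \<le> 2" by (simp add: card_insert_le_m1)
  ultimately show ?thesis unfolding Dcount0 Zset_cons by linarith
qed

lemma Dcount_cons_good: "a \<in> Zset n G \<Longrightarrow> b \<in> Zset n G \<Longrightarrow> a \<noteq> b \<Longrightarrow> Dcount n 0 ((a,b)#G) = Dcount n 0 G - 2"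
  unfolding Dcount0 Zset_cons
  by (subst card_Diff_subset) (auto intro: finite_subset[OF Zset_sub])

lemma Dcount_le_n: "Dcount n 0 G \<le> n"
  unfolding Dcount0 using card_mono[OF _ Zset_sub, of n G] by simp

lemma Dcount_nil: "Dcount n 0 [] = n"
  by (simp add: Dcount_def degree_def)

definition Sk :: "nat \<Rightarrow> nat \<Rightarrow> nat set set" where
  "Sk n k = {S. S \<subseteq> {..<n} \<and> card S = k}"

lemma Sk_fin: "finite (Sk n k)"
  unfolding Sk_def by (rule finite_subset[of _ "Pow {..<n}"]) auto

lemma Sk_ne: "k \<le> n \<Longrightarrow> Sk n k \<noteq> {}"
proof -
  assume "k \<le> n" then have "{..<k} \<in> Sk n k" unfolding Sk_def by auto
  then show ?thesis by blast
qed



definition Wsel :: "mgraph \<Rightarrow> nat set \<Rightarrow> nat set" where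
  "Wsel G V = (if card {v \<in> V. degree G v = 0} \<ge> 2 then {v \<in> V. degree G v = 0}
     else if card {v \<in> V. degree G v = 1} \<ge> 2 then {v \<in> V. degree G v = 1} else V)"

definition inner :: "mgraph \<Rightarrow> nat set \<Rightarrow> mgraph pmf" where
  "inner G V = pmf_of_set (distinct_pairs (Wsel G V)) \<bind> (\<lambda>e. return_pmf (e # G))"

lemma drv_step_alt: "drv_step n k G = pmf_of_set (Sk n k) \<bind> inner G"
  unfolding drv_step_def Sk_def inner_def Wsel_def Let_def by (rule refl)

lemma Wsel_props:
  assumes "V \<in> Sk n k" "2 \<le> k"
  shows "2 \<le> card (Wsel G V)" "Wsel G V \<subseteq> V" "finite (Wsel G V)"
proof -
  have fV: "finite V" using assms unfolding Sk_def by (auto intro: finite_subset)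
  show "2 \<le> card (Wsel G V)" using assms unfolding Wsel_def Sk_def by auto
  show "Wsel G V \<subseteq> V" unfolding Wsel_def by auto
  then show "finite (Wsel G V)" using fV finite_subset by blast
qed

lemma dp_props:
  assumes "finite W" "2 \<le> card W"
  shows "finite (distinct_pairs W)" "distinct_pairs W \<noteq> {}"
proof -
  show "finite (distinct_pairs W)"
    by (rule finite_subset[of _ "W \<times> W"]) (auto simp: distinct_pairs_def assms)
  obtain T where T: "T \<subseteq> W" "card T = 2" using obtain_subset_with_card_n[of 2 W] assms by auto
  then obtain a b where "T = {a,b}" "a \<noteq> b" by (meson card_2_iff)
  then have "(a,b) \<in> distinct_pairs W" using T by (auto simp: distinct_pairs_def)
  then show "distinct_pairs W \<noteq> {}" by blast
qed

lemma inner_supp: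
  assumes "V \<in> Sk n k" "2 \<le> k" "G' \<in> set_pmf (inner G V)"
  shows "\<exists>a b. (a,b) \<in> distinct_pairs (Wsel G V) \<and> G' = (a,b)#G"
proof -
  note W = Wsel_props[OF assms(1,2), of G]
  note D = dp_props[OF W(3) W(1)]
  show ?thesis using assms(3) D unfolding inner_def by auto
qed

lemma step_supp:
  assumes "2 \<le> k" "k \<le> n" "G' \<in> set_pmf (drv_step n k G)"
  shows "\<exists>V a b. V \<in> Sk n k \<and> (a,b) \<in> distinct_pairs (Wsel G V) \<and> G' = (a,b)#G"
proof -
  from assms(3) obtain V where V: "V \<in> Sk n k" "G' \<in> set_pmf (inner G V)"
    unfolding drv_step_alt using Sk_fin Sk_ne[OF assms(2)] by auto
  then show ?thesis using inner_supp[OF V(1) assms(1) V(2)] by blast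
qed

lemma good_case:
  assumes "V \<in> Sk n k" "(a,b) \<in> distinct_pairs (Wsel G V)" "card {v \<in> V. degree G v = 0} \<ge> 2"
  shows "Dcount n 0 ((a,b)#G) = Dcount n 0 G - 2"
proof -
  have "a \<in> Zset n G" "b \<in> Zset n G" "a \<noteq> b"
    using assms unfolding Wsel_def distinct_pairs_def Zset_def Sk_def by auto
  then show ?thesis by (rule Dcount_cons_good)
qed

lemma step_supp_bounds:
  assumes "2 \<le> k" "k \<le> n" "G' \<in> set_pmf (drv_step n k G)"
  shows "Dcount n 0 G' \<le> Dcount n 0 G" "Dcount n 0 G - 2 \<le> Dcount n 0 G'"
  using step_supp[OF assms] Dcount_cons_le Dcount_cons_ge by blast+

lemma drv_supp_lb:
  assumes "2 \<le> k" "k \<le> n" "G \<in> set_pmf (drv n k t)"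
  shows "n - 2 * t \<le> Dcount n 0 G"
  using assms(3)
proof (induction t arbitrary: G)
  case 0 then show ?case by (simp add: Dcount_nil)
next
  case (Suc t)
  then obtain H where H: "H \<in> set_pmf (drv n k t)" "G \<in> set_pmf (drv_step n k H)" by auto
  have "n - 2 * t \<le> Dcount n 0 H" using Suc.IH H(1) .
  moreover have "Dcount n 0 H - 2 \<le> Dcount n 0 G" using step_supp_bounds(2)[OF assms(1,2) H(2)] .
  ultimately show ?case by arith
qed



definition rr :: "nat \<Rightarrow> nat \<Rightarrow> real" where "rr n k = exp (- real k / real n)"
definition hh :: "nat \<Rightarrow> nat \<Rightarrow> nat \<Rightarrow> real" where "hh n k x = 4 * (\<Sum>i<x div 2. rr n k ^ i)"
definition gg :: "nat \<Rightarrow> nat \<Rightarrow> nat \<Rightarrow> real" where "gg n k x = real x / 2 + hh n k x"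
definition phi :: "nat \<Rightarrow> nat \<Rightarrow> mgraph \<Rightarrow> real" where "phi n k G = gg n k (Dcount n 0 G)"
definition mm :: "nat \<Rightarrow> nat \<Rightarrow> real" where "mm n k = 4 * real n / real k + 3"

lemma rr_pos: "0 < rr n k" by (simp add: rr_def)
lemma rr_le1: "rr n k \<le> 1" by (simp add: rr_def)

lemma hh_nonneg: "0 \<le> hh n k x"
  unfolding hh_def using rr_pos by (intro mult_nonneg_nonneg sum_nonneg) (auto intro: less_imp_le)

lemma hh_mono: "x \<le> x' \<Longrightarrow> hh n k x \<le> hh n k x'"
  unfolding hh_def using rr_pos
  by (intro mult_left_mono sum_mono2) (auto intro: less_imp_le div_le_mono)

lemma gg_mono: "x \<le> x' \<Longrightarrow> gg n k x \<le> gg n k x'"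
  unfolding gg_def using hh_mono[of x x' n k] by simp

lemma gg_nonneg: "0 \<le> gg n k x"
  unfolding gg_def using hh_nonneg[of n k x] by simp

lemma gg_diff:
  assumes "2 \<le> x"
  shows "gg n k x - gg n k (x - 2) = 1 + 4 * rr n k ^ (x div 2 - 1)"
proof -
  have e1: "(x - 2) div 2 = x div 2 - 1" using assms by linarith
  have e2: "x div 2 = Suc (x div 2 - 1)" using assms by linarith
  have "hh n k x = hh n k (x - 2) + 4 * rr n k ^ (x div 2 - 1)"
    unfolding hh_def e1 by (subst e2) (simp add: algebra_simps)
  then show ?thesis unfolding gg_def using assms by (simp add: of_nat_diff field_simps)
qed

lemma phi_bound: "\<bar>phi n k G\<bar> \<le> gg n k n"
  unfolding phi_def using gg_nonneg gg_mono[OF Dcount_le_n] by (simp add: abs_of_nonneg)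

lemma hh_n_bound:
  assumes "0 < k" "k \<le> n"
  shows "hh n k n \<le> 8 * real n / real k"
proof -
  define a where "a = real k / real n"
  have a: "0 < a" "a \<le> 1" using assms by (auto simp: a_def)
  have r: "rr n k = inverse (exp a)" unfolding rr_def a_def by (simp add: exp_minus)
  have "1 + a \<le> exp a" by (rule exp_ge_add_one_self)
  hence "rr n k \<le> 1 / (1 + a)" unfolding r using a by (simp add: field_simps)
  hence "1 - rr n k \<ge> a / (1 + a)" using a by (simp add: field_simps)
  moreover have "a / (1 + a) \<ge> a / 2" using a by (intro divide_left_mono) auto
  ultimately have om: "1 - rr n k \<ge> a / 2" by linarith
  have rl: "rr n k < 1" using om a by linarith
  have "(\<Sum>i<n div 2. rr n k ^ i) = (1 - rr n k ^ (n div 2)) / (1 - rr n k)"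
    using rl by (subst sum_gp_strict) auto
  also have "\<dots> \<le> 1 / (1 - rr n k)" using rr_pos[of n k] rl
    by (intro divide_right_mono) (auto intro: less_imp_le)
  also have "\<dots> \<le> 1 / (a / 2)" using om a by (intro divide_left_mono) auto
  finally have "hh n k n \<le> 4 * (2 / a)" unfolding hh_def by simp
  also have "\<dots> = 8 * real n / real k" using assms by (simp add: a_def field_simps)
  finally show ?thesis .
qed

lemma step_le:
  assumes "2 \<le> k" "k \<le> n"
  shows "measure_pmf.expectation (drv_step n k G) (phi n k) \<le> phi n k G"
  using phi_bound
  by (rule exp_le_const) (auto simp: phi_def intro: gg_mono step_supp_bounds[OF assms])



lemma exp_m2: "exp (-2::real) \<le> 1/4"
proof -
  have "2 \<le> exp (1::real)" using exp_ge_add_one_self[of 1] by simp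
  hence "2 * 2 \<le> exp (1::real) * exp 1" by (intro mult_mono) auto
  hence "4 \<le> exp (1::real) * exp 1" by simp
  hence "4 \<le> exp (2::real)" by (simp add: exp_add[symmetric])
  then show ?thesis by (simp add: exp_minus field_simps)
qed

lemma step_drift:
  assumes k2: "2 \<le> k" and kn: "k \<le> n" and big: "real (Dcount n 0 G) > mm n k"
  shows "measure_pmf.expectation (drv_step n k G) (phi n k) \<le> phi n k G - 1"
proof -
  define x where "x = Dcount n 0 G"
  define y where "y = x div 2"
  define s where "s = rr n k ^ (y - 1)"
  define Z where "Z = Zset n G"
  have n0: "0 < n" using k2 kn by simp
  have xbig: "real x > 4 * real n / real k + 3" using big unfolding x_def mm_def .
  have "0 \<le> 4 * real n / real k" by simp
  hence "(3::real) < real x" using xbig by linarith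
  hence x2: "2 \<le> x" by simp
  have y1: "real (y - 1) > 2 * real n / real k"
  proof -
    have "real x \<le> 2 * real y + 1" unfolding y_def by linarith
    hence "real y > 2 * real n / real k + 1" using xbig by linarith
    moreover have "1 \<le> y" using x2 unfolding y_def by linarith
    ultimately show ?thesis by (simp add: of_nat_diff)
  qed
  have s_nonneg: "0 \<le> s" unfolding s_def using rr_pos[of n k] by simp
  have s4: "s \<le> 1/4"
  proof -
    have "s = exp (real (y - 1) * (- real k / real n))" unfolding s_def rr_def by (rule exp_of_nat_mult[symmetric])
    also have "\<dots> \<le> exp (-2)"
    proof -
      have "real (y - 1) * (real k / real n) \<ge> 2 * real n / real k * (real k / real n)"
        using y1 k2 n0 by (intro mult_right_mono) auto
      also have "2 * real n / real k * (real k / real n) = 2" using k2 n0 by (simp add: field_simps)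
      finally have h: "2 \<le> real (y - 1) * (real k / real n)" .
      have "real (y - 1) * (- real k / real n) = - (real (y - 1) * (real k / real n))"
        by (simp only: minus_divide_left[symmetric] mult_minus_right)
      then show ?thesis using h by (simp only: exp_le_cancel_iff)
    qed
    finally show ?thesis using exp_m2 by linarith
  qed
  define a where "a = gg n k (x - 2)"
  define d where "d = 1 + 4 * s"
  have gx: "gg n k x = a + d" using gg_diff[OF x2, of n k] unfolding a_def d_def s_def y_def by simp
  define f where "f = (\<lambda>V. if 2 \<le> card {v \<in> V. degree G v = 0} then a else gg n k x)"
  let ?B = "gg n k n"
  have "measure_pmf.expectation (drv_step n k G) (phi n k)
        = measure_pmf.expectation (pmf_of_set (Sk n k)) (\<lambda>V. measure_pmf.expectation (inner G V) (phi n k))"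
    unfolding drv_step_alt by (rule exp_bind_pmf[OF phi_bound])
  also have "\<dots> \<le> measure_pmf.expectation (pmf_of_set (Sk n k)) f"
  proof (rule exp_le_supp)
    show "\<bar>measure_pmf.expectation (inner G V) (phi n k)\<bar> \<le> ?B" for V
    proof -
      have "\<bar>measure_pmf.expectation (inner G V) (phi n k)\<bar> \<le> measure_pmf.expectation (inner G V) (\<lambda>G. \<bar>phi n k G\<bar>)"
        by (rule integral_abs_bound)
      also have "\<dots> \<le> ?B" by (rule exp_le_const[of _ ?B]) (auto intro: phi_bound)
      finally show ?thesis .
    qed
    show "\<bar>f V\<bar> \<le> \<bar>a\<bar> + \<bar>gg n k x\<bar>" for V unfolding f_def by auto
    fix V assume "V \<in> set_pmf (pmf_of_set (Sk n k))"
    hence V: "V \<in> Sk n k" using Sk_fin Sk_ne[OF kn] by simp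
    show "measure_pmf.expectation (inner G V) (phi n k) \<le> f V"
    proof (rule exp_le_const[OF phi_bound])
      fix G' assume "G' \<in> set_pmf (inner G V)"
      then obtain p q where pq: "(p,q) \<in> distinct_pairs (Wsel G V)" "G' = (p,q)#G"
        using inner_supp[OF V k2] by blast
      show "phi n k G' \<le> f V"
      proof (cases "2 \<le> card {v \<in> V. degree G v = 0}")
        case True
        then show ?thesis using good_case[OF V pq(1) True] pq(2) unfolding f_def phi_def a_def x_def by simp
      next
        case False
        then show ?thesis using Dcount_cons_le[of n p q G] pq(2) unfolding f_def phi_def x_def
          by (simp add: gg_mono)
      qed
    qed
  qed
  also have "\<dots> = (\<Sum>V\<in>Sk n k. f V) / real (card (Sk n k))" by (rule integral_pmf_of_set[OF Sk_ne[OF kn] Sk_fin])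
  also have "(\<Sum>V\<in>Sk n k. f V) = (\<Sum>V\<in>Sk n k. a + d * (if card (V \<inter> Z) < 2 then 1 else 0))"
  proof (rule sum.cong[OF refl])
    fix V assume "V \<in> Sk n k"
    hence "{v \<in> V. degree G v = 0} = V \<inter> Z" unfolding Sk_def Z_def Zset_def by auto
    then show "f V = a + d * (if card (V \<inter> Z) < 2 then 1 else 0)" unfolding f_def using gx by auto
  qed
  also have "\<dots> = real (card (Sk n k)) * a + d * real (card {V \<in> Sk n k. card (V \<inter> Z) < 2})"
    by (simp add: sum.distrib sum_distrib_left[symmetric] sum.If_cases Sk_fin Int_def)
  finally have E: "measure_pmf.expectation (drv_step n k G) (phi n k)
     \<le> (real (card (Sk n k)) * a + d * real (card {V \<in> Sk n k. card (V \<inter> Z) < 2})) / real (card (Sk n k))" .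
  have cS: "card (Sk n k) = n choose k" unfolding Sk_def using n_subsets[of "{..<n}" k] by simp
  have Cpos: "0 < real (n choose k)" using kn by simp
  have "real (card {V \<in> Sk n k. card (V \<inter> Z) < 2}) \<le> 2 * real (n choose k) * rr n k ^ y"
    using bad_count[of Z n x k] Zset_sub[of n G] kn n0 unfolding Z_def x_def y_def rr_def Dcount0 Sk_def
    by (simp add: conj_assoc)
  also have "rr n k ^ y \<le> s" unfolding s_def using rr_pos[of n k] rr_le1[of n k]
    by (intro power_decreasing) auto
  hence "2 * real (n choose k) * rr n k ^ y \<le> 2 * real (n choose k) * s" using Cpos by simp
  finally have bad: "real (card {V \<in> Sk n k. card (V \<inter> Z) < 2}) \<le> 2 * real (n choose k) * s" .
  have d0: "0 \<le> d" unfolding d_def using s_nonneg by simp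
  have "(real (card (Sk n k)) * a + d * real (card {V \<in> Sk n k. card (V \<inter> Z) < 2})) / real (card (Sk n k))
        = a + d * (real (card {V \<in> Sk n k. card (V \<inter> Z) < 2}) / real (n choose k))"
    using Cpos unfolding cS by (simp add: field_simps)
  also have "\<dots> \<le> a + d * (2 * s)"
    using bad Cpos d0 by (intro add_left_mono mult_left_mono) (auto simp: field_simps)
  also have "\<dots> \<le> a + d - 1"
  proof -
    have "s * s \<le> s * (1/4)" using s4 s_nonneg by (rule mult_left_mono)
    then show ?thesis unfolding d_def by (simp add: algebra_simps)
  qed
  finally show ?thesis using E gx unfolding phi_def x_def by linarith
qed



lemma exp_minus_const:
  fixes f :: "'b \<Rightarrow> real"
  assumes "\<And>x. \<bar>f x\<bar> \<le> B"
  shows "measure_pmf.expectation p (\<lambda>x. f x - c) = measure_pmf.expectation p f - c"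
proof -
  have i: "integrable (measure_pmf p) f"
    by (rule measure_pmf.integrable_const_bound[where B=B]) (auto simp: assms)
  show ?thesis by (subst Bochner_Integration.integral_diff[OF i]) auto
qed

lemma main_ind:
  assumes k2: "2 \<le> k" and kn: "k \<le> n"
  shows "measure_pmf.expectation (drv n k t) (phi n k) \<le> gg n k n - min (real t) ((real n - mm n k) / 2)"
proof (induction t)
  case 0
  show ?case by (simp add: phi_def Dcount_nil)
next
  case (Suc t)
  define c :: real where "c = (if real t < (real n - mm n k) / 2 then 1 else 0)"
  have "measure_pmf.expectation (drv n k (Suc t)) (phi n k)
      = measure_pmf.expectation (drv n k t) (\<lambda>G. measure_pmf.expectation (drv_step n k G) (phi n k))"
    by (simp only: drv.simps) (rule exp_bind_pmf[OF phi_bound])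
  also have "\<dots> \<le> measure_pmf.expectation (drv n k t) (\<lambda>G. phi n k G - c)"
  proof (rule exp_le_supp)
    show "\<bar>measure_pmf.expectation (drv_step n k G) (phi n k)\<bar> \<le> gg n k n" for G
    proof -
      have "\<bar>measure_pmf.expectation (drv_step n k G) (phi n k)\<bar> \<le> measure_pmf.expectation (drv_step n k G) (\<lambda>G. \<bar>phi n k G\<bar>)"
        by (rule integral_abs_bound)
      also have "\<dots> \<le> gg n k n" by (rule exp_le_const[of _ "gg n k n"]) (auto intro: phi_bound)
      finally show ?thesis .
    qed
    show "\<bar>phi n k G - c\<bar> \<le> gg n k n + 1" for G
      using phi_bound[of n k G] unfolding c_def by auto
    fix G assume G: "G \<in> set_pmf (drv n k t)"
    show "measure_pmf.expectation (drv_step n k G) (phi n k) \<le> phi n k G - c"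
    proof (cases "real t < (real n - mm n k) / 2")
      case True
      have lb: "n - 2 * t \<le> Dcount n 0 G" by (rule drv_supp_lb[OF k2 kn G])
      have "0 \<le> mm n k" unfolding mm_def by simp
      hence "real (2 * t) \<le> real n" using True by simp
      hence "2 * t \<le> n" by (simp only: of_nat_le_iff)
      hence "real (n - 2 * t) = real n - 2 * real t" by (simp add: of_nat_diff)
      moreover have "real (n - 2 * t) \<le> real (Dcount n 0 G)" using lb by (simp only: of_nat_le_iff)
      ultimately have "real n - 2 * real t \<le> real (Dcount n 0 G)" by linarith
      moreover have "2 * real t < real n - mm n k" using True by (simp add: field_simps)
      ultimately have "real (Dcount n 0 G) > mm n k" by linarith
      then show ?thesis using step_drift[OF k2 kn] True unfolding c_def by simp
    next
      case False
      then show ?thesis using step_le[OF k2 kn] unfolding c_def by simp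
    qed
  qed
  also have "\<dots> = measure_pmf.expectation (drv n k t) (phi n k) - c"
    by (rule exp_minus_const[OF phi_bound])
  also have "\<dots> \<le> gg n k n - min (real t) ((real n - mm n k) / 2) - c" using Suc.IH by simp
  also have "\<dots> \<le> gg n k n - min (real (Suc t)) ((real n - mm n k) / 2)"
    unfolding c_def by auto
  finally show ?case .
qed

lemma aux_lin: "(real n - m - 1) / 2 \<le> M \<Longrightarrow>
  2 * (real n / 2 + h - M) \<le> m + 1 + 2 * (h::real)"
  by (simp add: field_simps)

lemma final_bound:
  assumes k2: "2 \<le> k" and kn: "k \<le> n"
  shows "measure_pmf.expectation (drv n k (n div 2)) (\<lambda>G. real (Dcount n 0 G)) \<le> 24 * (real n / real k)"
proof -
  have "measure_pmf.expectation (drv n k (n div 2)) (\<lambda>G. real (Dcount n 0 G))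
        \<le> measure_pmf.expectation (drv n k (n div 2)) (\<lambda>G. 2 * phi n k G)"
  proof (rule exp_le_supp)
    show "\<bar>real (Dcount n 0 G)\<bar> \<le> real n" for G using Dcount_le_n[of n G] by simp
    show "\<bar>2 * phi n k G\<bar> \<le> 2 * gg n k n" for G using phi_bound[of n k G] by simp
    show "real (Dcount n 0 G) \<le> 2 * phi n k G" for G
      unfolding phi_def gg_def using hh_nonneg[of n k "Dcount n 0 G"] by simp
  qed
  also have "\<dots> = 2 * measure_pmf.expectation (drv n k (n div 2)) (phi n k)" by simp
  also have "\<dots> \<le> 2 * (gg n k n - min (real (n div 2)) ((real n - mm n k) / 2))"
    using main_ind[OF k2 kn, of "n div 2"] by (intro mult_left_mono) auto
  also have "\<dots> \<le> mm n k + 1 + 2 * hh n k n"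
  proof -
    have "n \<le> 2 * (n div 2) + 1" by linarith
    hence "real n \<le> real (2 * (n div 2) + 1)" by (simp only: of_nat_le_iff)
    hence "real (n div 2) \<ge> (real n - 1) / 2" by simp
    moreover have "0 \<le> mm n k" unfolding mm_def by simp
    ultimately have "min (real (n div 2)) ((real n - mm n k) / 2) \<ge> (real n - mm n k - 1) / 2" by auto
    then show ?thesis unfolding gg_def by (rule aux_lin)
  qed
  also have "\<dots> \<le> 4 * real n / real k + 4 + 16 * real n / real k"
    using hh_n_bound[of k n] k2 kn unfolding mm_def by simp
  also have "\<dots> \<le> 24 * (real n / real k)"
  proof -
    have "1 \<le> real n / real k" using k2 kn by simp
    then show ?thesis by simp
  qed
  finally show ?thesis .
qed

theorem proposition1:
  fixes k :: "nat \<Rightarrow> nat"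
  assumes "\<And>n. n \<ge> 2 \<Longrightarrow> 2 \<le> k n \<and> k n \<le> n"
    and "filterlim k at_top at_top"
  shows "(\<lambda>n. measure_pmf.expectation (drv n (k n) (n div 2)) (\<lambda>G. real (Dcount n 0 G)))
           \<in> O(\<lambda>n. real n / real (k n))"
proof (rule bigoI[where c=24])
  show "\<forall>\<^sub>F n in at_top. norm (measure_pmf.expectation (drv n (k n) (n div 2)) (\<lambda>G. real (Dcount n 0 G)))
          \<le> 24 * norm (real n / real (k n))"
    using eventually_ge_at_top[of 2]
  proof eventually_elim
    case (elim n)
    have kk: "2 \<le> k n" "k n \<le> n" using assms(1)[OF elim] by auto
    have "0 \<le> measure_pmf.expectation (drv n (k n) (n div 2)) (\<lambda>G. real (Dcount n 0 G))"
      by (rule Bochner_Integration.integral_nonneg) simp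
    then show ?case using final_bound[OF kk] by simp
  qed
qed

end
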